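(* Let $\mathcal X\subseteq\mathbb{R}^n$ be a polytope and $K:\mathcal X\to\mathbb{R}^{m\times n}$ an affine function. Then, for $\alpha\in\{1,\infty\}$, computing $\mathcal L_\alpha(K,\mathcal X)=\max_{x\in\mathcal X}\|K(x)\|_\alpha$ amounts to a mixed-integer linear program, i.e. this maximum equals the optimal value of a mixed-integer linear program.
   Context: $\|\cdot\|_\alpha$ on matrices denotes the operator norm induced by the vector $\alpha$-norm. *)

theory Defs
  imports "HOL-Analysis.Analysis"
begin

datatype normidx = Norm1 | NormInf

definition vnorm :: "normidx \<Rightarrow> real ^ 'k \<Rightarrow> real" where
  "vnorm a v = (case a of
      Norm1 \<Rightarrow> (\<Sum>i\<in>UNIV. \<bar>v $ i\<bar>)
    | NormInf \<Rightarrow> Max ((\<lambda>i. \<bar>v $ i\<bar>) ` UNIV))"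

definition opnorm :: "normidx \<Rightarrow> real ^ 'n ^ 'm \<Rightarrow> real" where
  "opnorm a A = Sup {vnorm a (A *v x) | x. vnorm a x = 1}"

definition milp_feasible ::
  "nat \<Rightarrow> nat \<Rightarrow> (nat \<Rightarrow> nat \<Rightarrow> real) \<Rightarrow> (nat \<Rightarrow> real) \<Rightarrow> nat set \<Rightarrow> (nat \<Rightarrow> real) set" where
  "milp_feasible N p A b I =
     {z. (\<forall>j\<ge>N. z j = 0) \<and> (\<forall>r<p. (\<Sum>j<N. A r j * z j) \<le> b r) \<and> (\<forall>j\<in>I. z j \<in> \<int>)}"

definition milp_obj :: "nat \<Rightarrow> (nat \<Rightarrow> real) \<Rightarrow> (nat \<Rightarrow> real) \<Rightarrow> real" where
  "milp_obj N c z = (\<Sum>j<N. c j * z j)"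

definition milp_opt_value ::
  "nat \<Rightarrow> nat \<Rightarrow> (nat \<Rightarrow> nat \<Rightarrow> real) \<Rightarrow> (nat \<Rightarrow> real) \<Rightarrow> nat set \<Rightarrow> (nat \<Rightarrow> real) \<Rightarrow> real \<Rightarrow> bool" where
  "milp_opt_value N p A b I c V \<longleftrightarrow>
     (\<exists>z\<in>milp_feasible N p A b I. milp_obj N c z = V) \<and>
     (\<forall>z\<in>milp_feasible N p A b I. milp_obj N c z \<le> V)"

end

theory Submission
  imports Defs
begin


definition lin :: "nat \<Rightarrow> (nat \<Rightarrow> real) \<Rightarrow> (nat \<Rightarrow> real) \<Rightarrow> real" where
  "lin N a z = (\<Sum>j<N. a j * z j)"
definition U :: "nat \<Rightarrow> nat \<Rightarrow> real" where
  "U i j = (if j = i then 1 else 0)"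

lemma lin_add[simp]: "lin N (\<lambda>j. a j + b j) z = lin N a z + lin N b z"
  by (simp add: lin_def algebra_simps sum.distrib)
lemma lin_diff[simp]: "lin N (\<lambda>j. a j - b j) z = lin N a z - lin N b z"
  by (simp add: lin_def algebra_simps sum_subtractf)
lemma lin_neg[simp]: "lin N (\<lambda>j. - a j) z = - lin N a z"
  by (simp add: lin_def sum_negf)
lemma lin_scale[simp]: "lin N (\<lambda>j. c * a j) z = c * lin N a z"
  by (simp add: lin_def sum_distrib_left mult.assoc)
lemma lin_sum[simp]: "lin N (\<lambda>j. sum (\<lambda>t. f t j) T) z = (\<Sum>t\<in>T. lin N (f t) z)"
  unfolding lin_def by (simp add: sum_distrib_right sum.swap[of _ T])
lemma lin_U[simp]: "i < N \<Longrightarrow> lin N (U i) z = z i"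
  unfolding lin_def U_def by (simp add: if_distrib[where f="\<lambda>c. c * _"] cong: if_cong)

lemma feasible_iff:
  "z \<in> milp_feasible N (length rs) (\<lambda>r. fst (rs!r)) (\<lambda>r. snd (rs!r)) I \<longleftrightarrow>
   (\<forall>j\<ge>N. z j = 0) \<and> (\<forall>ab\<in>set rs. lin N (fst ab) z \<le> snd ab) \<and> (\<forall>j\<in>I. z j \<in> \<int>)"
  unfolding milp_feasible_def lin_def by (auto simp: all_set_conv_all_nth)

lemma int_lt1: "(x::real) \<in> \<int> \<Longrightarrow> x < 1 \<Longrightarrow> x \<le> 0"
  by (elim Ints_cases) simp

lemma milp_max:
  fixes X :: "(real^'n) set" and cf :: "nat \<Rightarrow> real^'n" and bf :: "nat \<Rightarrow> real"
  assumes XS: "X = convex hull S" and fS: "finite S" and nl: "nl > 0" and bX: "bounded X"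
  defines "F \<equiv> \<lambda>x. Max ((\<lambda>t. cf t \<bullet> x + bf t) ` {..<nl})"
  shows "\<exists>N p A b I c e. I \<subseteq> {..<N} \<and> inj e \<and> (\<forall>j. e j < N) \<and>
     (\<forall>z\<in>milp_feasible N p A b I. (\<chi> j. z (e j)) \<in> X \<and> milp_obj N c z \<le> F (\<chi> j. z (e j))) \<and>
     (\<forall>x\<in>X. \<exists>z\<in>milp_feasible N p A b I. (\<chi> j. z (e j)) = x \<and> milp_obj N c z = F x)"
proof -
  obtain vs where vs: "set vs = S" "distinct vs" using finite_distinct_list[OF fS] by blast
  define nv where "nv = length vs"
  define n where "n = CARD('n)"
  obtain e :: "'n \<Rightarrow> nat" where e: "bij_betw e UNIV {0..<n}"
    using ex_bij_betw_finite_nat[of "UNIV::'n set"] unfolding n_def by fastforce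
  have einj: "inj e" using e by (simp add: bij_betw_def)
  have ek: "\<And>k. e k < n" using e by (auto simp: bij_betw_def)
  obtain B where B0: "B > 0" and B: "\<And>x. x \<in> X \<Longrightarrow> norm x \<le> B" using bX unfolding bounded_pos by blast
  define h where "h t = norm (cf t) * B + \<bar>bf t\<bar>" for t
  define M where "M = 2 * (\<Sum>t<nl. h t)"
  obtain ns :: "'n list" where ns: "set ns = UNIV" using finite_list[of "UNIV::'n set"] by auto
  define wi where "wi = n + nv + nl"
  define N where "N = Suc wi"
  define R1a where "R1a k = ((\<lambda>j. (\<Sum>v<nv. (vs!v)$k * U (n+v) j) - U (e k) j), 0::real)" for k
  define R1b where "R1b k = ((\<lambda>j. U (e k) j - (\<Sum>v<nv. (vs!v)$k * U (n+v) j)), 0::real)" for k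
  define R2 where "R2 v = ((\<lambda>j. - U (n+v) j), 0::real)" for v
  define R3a where "R3a = ((\<lambda>j. \<Sum>v<nv. U (n+v) j), 1::real)"
  define R3b where "R3b = ((\<lambda>j. - (\<Sum>v<nv. U (n+v) j)), -1::real)"
  define R5 where "R5 = ((\<lambda>j. - (\<Sum>l<nl. U (n+nv+l) j)), -1::real)"
  define R6 where "R6 l = ((\<lambda>j. U wi j - (\<Sum>k\<in>UNIV. (cf l)$k * U (e k) j) + M * U (n+nv+l) j), bf l + M)" for l
  define rs where "rs = map R1a ns @ map R1b ns @ map R2 [0..<nv] @ [R3a, R3b, R5] @ map R6 [0..<nl]"
  define I where "I = {n+nv..<n+nv+nl}"
  have setrs: "set rs = R1a ` UNIV \<union> R1b ` UNIV \<union> R2 ` {..<nv} \<union> {R3a, R3b, R5} \<union> R6 ` {..<nl}"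
    by (auto simp: rs_def ns)
  have bnd: "\<And>k. e k < N" "\<And>v. v < nv \<Longrightarrow> n + v < N" "\<And>l. l < nl \<Longrightarrow> n + nv + l < N" "wi < N"
    using ek by (simp_all add: N_def wi_def less_Suc_eq add.assoc) (metis add.commute trans_less_add1)
  have obj: "milp_obj N (U wi) z = z wi" for z
    using lin_U[OF bnd(4), of z] by (simp add: milp_obj_def lin_def)
  have innr: "cf l \<bullet> (\<chi> j. z (e j)) = (\<Sum>k\<in>UNIV. (cf l)$k * z (e k))" for l z
    by (simp add: inner_vec_def)
  have hnn: "h t \<ge> 0" for t
  proof -
    have "B \<ge> 0" using B0 by simp
    then show ?thesis by (simp add: h_def)
  qed
  have Mnn: "M \<ge> 0" unfolding M_def using hnn by (simp add: sum_nonneg)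
  have part1: "(\<chi> j. z (e j)) \<in> X \<and> milp_obj N (U wi) z \<le> F (\<chi> j. z (e j))"
    if z: "z \<in> milp_feasible N (length rs) (\<lambda>r. fst (rs!r)) (\<lambda>r. snd (rs!r)) I" for z
  proof -
    note zf = z[unfolded feasible_iff]
    have r1: "z (e k) = (\<Sum>v<nv. (vs!v)$k * z (n+v))" for k
    proof -
      have "lin N (fst (R1a k)) z \<le> snd (R1a k)" "lin N (fst (R1b k)) z \<le> snd (R1b k)"
        using zf setrs by auto
      then show ?thesis using bnd by (simp add: R1a_def R1b_def)
    qed
    have r2: "z (n+v) \<ge> 0" if "v < nv" for v
    proof -
      have "lin N (fst (R2 v)) z \<le> snd (R2 v)" using zf setrs that by auto
      then show ?thesis using bnd that by (simp add: R2_def)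
    qed
    have r3: "(\<Sum>v<nv. z (n+v)) = 1"
    proof -
      have "lin N (fst R3a) z \<le> snd R3a" "lin N (fst R3b) z \<le> snd R3b" using zf setrs by auto
      then show ?thesis using bnd by (simp add: R3a_def R3b_def)
    qed
    have r5: "(\<Sum>l<nl. z (n+nv+l)) \<ge> 1"
    proof -
      have "lin N (fst R5) z \<le> snd R5" using zf setrs by auto
      then show ?thesis using bnd by (simp add: R5_def)
    qed
    have r6: "z wi - (\<Sum>k\<in>UNIV. (cf l)$k * z (e k)) + M * z (n+nv+l) \<le> bf l + M" if "l < nl" for l
    proof -
      have "lin N (fst (R6 l)) z \<le> snd (R6 l)" using zf setrs that by auto
      then show ?thesis using bnd that by (simp add: R6_def)
    qed
    have xeq: "(\<chi> j. z (e j)) = (\<Sum>v<nv. z (n+v) *\<^sub>R vs!v)"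
      by (simp add: vec_eq_iff sum_component r1 mult.commute)
    have "(\<Sum>v<nv. z (n+v) *\<^sub>R vs!v) \<in> convex hull S"
      by (rule convex_sum) (use r2 r3 vs in \<open>auto simp: nv_def intro: hull_inc\<close>)
    then have inX: "(\<chi> j. z (e j)) \<in> X" using xeq XS by simp
    obtain l where l: "l < nl" "z (n+nv+l) \<ge> 1"
    proof (rule ccontr)
      assume "\<not> thesis"
      then have "\<forall>l<nl. z (n+nv+l) < 1" using that by force
      moreover have "\<forall>l<nl. z (n+nv+l) \<in> \<int>" using zf by (auto simp: I_def)
      ultimately have "\<forall>l<nl. z (n+nv+l) \<le> 0" using int_lt1 by blast
      then have "(\<Sum>l<nl. z (n+nv+l)) \<le> 0" by (intro sum_nonpos) auto
      with r5 show False by simp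
    qed
    have "z wi \<le> cf l \<bullet> (\<chi> j. z (e j)) + bf l"
    proof -
      have "M * z (n+nv+l) \<ge> M" using l(2) Mnn by (metis mult_left_mono mult.right_neutral)
      then show ?thesis using r6[OF l(1)] innr[of l z] by linarith
    qed
    also have "\<dots> \<le> F (\<chi> j. z (e j))" unfolding F_def by (rule Max_ge) (use l in auto)
    finally show ?thesis using inX obj by simp
  qed
  have part2: "\<exists>z\<in>milp_feasible N (length rs) (\<lambda>r. fst (rs!r)) (\<lambda>r. snd (rs!r)) I.
     (\<chi> j. z (e j)) = x \<and> milp_obj N (U wi) z = F x" if x: "x \<in> X" for x
  proof -
    obtain u where u: "\<forall>y\<in>S. 0 \<le> u y" "sum u S = 1" "(\<Sum>y\<in>S. u y *\<^sub>R y) = x"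
      using x XS convex_hull_finite[OF fS] by auto
    have bnth: "bij_betw ((!) vs) {..<nv} S" using bij_betw_nth vs nv_def by blast
    have su: "(\<Sum>v<nv. u (vs!v)) = 1" using sum.reindex_bij_betw[OF bnth, of u] u by simp
    have sx: "(\<Sum>v<nv. u (vs!v) *\<^sub>R vs!v) = x"
      using sum.reindex_bij_betw[OF bnth, of "\<lambda>y. u y *\<^sub>R y"] u by simp
    have xk: "x$k = (\<Sum>v<nv. (vs!v)$k * u (vs!v))" for k
      using sx by (auto simp: vec_eq_iff sum_component mult.commute)
    have unn: "v < nv \<Longrightarrow> u (vs!v) \<ge> 0" for v using u(1) vs nv_def by auto
    have "F x \<in> (\<lambda>t. cf t \<bullet> x + bf t) ` {..<nl}" unfolding F_def
      by (rule Max_in) (use nl in auto)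
    then obtain l0 where l0: "l0 < nl" "F x = cf l0 \<bullet> x + bf l0" by auto
    define z where "z j = (if j < n then x $ inv e j else if j < n+nv then u (vs!(j-n))
       else if j < n+nv+nl then (if j = n+nv+l0 then 1 else 0) else if j = wi then F x else 0)" for j
    have ze: "z (e k) = x$k" for k using ek[of k] inv_f_f[OF einj] by (simp add: z_def)
    have zv: "v < nv \<Longrightarrow> z (n+v) = u (vs!v)" for v by (simp add: z_def)
    have zl: "l < nl \<Longrightarrow> z (n+nv+l) = (if l = l0 then 1 else 0)" for l by (simp add: z_def)
    have zw: "z wi = F x" by (simp add: z_def wi_def)
    have zN: "j \<ge> N \<Longrightarrow> z j = 0" for j by (simp add: z_def N_def wi_def)
    have proj: "(\<chi> j. z (e j)) = x" by (simp add: vec_eq_iff ze)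
    have hb: "\<bar>cf t \<bullet> x + bf t\<bar> \<le> h t" for t
    proof -
      have "\<bar>cf t \<bullet> x\<bar> \<le> norm (cf t) * norm x" by (rule Cauchy_Schwarz_ineq2)
      also have "\<dots> \<le> norm (cf t) * B" using B[OF x] by (simp add: mult_left_mono)
      finally show ?thesis unfolding h_def by linarith
    qed
    have hS: "t < nl \<Longrightarrow> h t \<le> (\<Sum>t<nl. h t)" for t
      by (rule member_le_sum) (use hnn in auto)
    have lsum: "(\<Sum>v<nv. f v * lin N (U (n+v)) z) = (\<Sum>v<nv. f v * z (n+v))" for f
      by (rule sum.cong) (simp_all add: bnd)
    have rowsok: "lin N (fst ab) z \<le> snd ab" if ab: "ab \<in> set rs" for ab
    proof -
      consider (a) k where "ab = R1a k" | (b) k where "ab = R1b k" | (c) v where "v < nv" "ab = R2 v"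
        | (d) "ab = R3a" | (e) "ab = R3b" | (f) "ab = R5" | (g) l where "l < nl" "ab = R6 l"
        using ab setrs by auto
      then show ?thesis
      proof cases
        case (a k) then show ?thesis using bnd by (simp add: R1a_def lsum zv ze xk)
      next
        case (b k) then show ?thesis using bnd by (simp add: R1b_def lsum zv ze xk)
      next
        case (c v) then show ?thesis using bnd unn by (simp add: R2_def zv)
      next
        case d then show ?thesis using bnd su by (simp add: R3a_def zv)
      next
        case e then show ?thesis using bnd su by (simp add: R3b_def zv)
      next
        case f
        have "(\<Sum>l<nl. z (n+nv+l)) = (\<Sum>l<nl. if l = l0 then 1 else 0)" by (rule sum.cong) (simp_all add: zl)
        also have "\<dots> = 1" using l0 by simp
        finally show ?thesis using f bnd by (simp add: R5_def)
      next
        case (g l)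
        have inn: "(\<Sum>k\<in>UNIV. (cf l)$k * z (e k)) = cf l \<bullet> x" by (simp add: inner_vec_def ze)
        have "F x - cf l \<bullet> x + M * z (n+nv+l) \<le> bf l + M"
        proof (cases "l = l0")
          case True then show ?thesis using l0 g zl by simp
        next
          case False
          have "F x \<le> h l0" using hb[of l0] l0 by simp
          moreover have "- (cf l \<bullet> x + bf l) \<le> h l" using hb[of l] by simp
          moreover have "h l0 \<le> (\<Sum>t<nl. h t)" "h l \<le> (\<Sum>t<nl. h t)" using hS l0 g by auto
          ultimately show ?thesis using False g zl by (simp add: M_def)
        qed
        then show ?thesis using g bnd by (simp add: R6_def zw inn)
      qed
    qed
    have zI: "\<forall>j\<in>I. z j \<in> \<int>" by (auto simp: I_def z_def)
    have "z \<in> milp_feasible N (length rs) (\<lambda>r. fst (rs!r)) (\<lambda>r. snd (rs!r)) I"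
      unfolding feasible_iff using zN rowsok zI by auto
    then show ?thesis using proj obj zw by auto
  qed
  show ?thesis
    apply (rule exI[of _ N], rule exI[of _ "length rs"], rule exI[of _ "\<lambda>r. fst (rs!r)"],
           rule exI[of _ "\<lambda>r. snd (rs!r)"], rule exI[of _ I], rule exI[of _ "U wi"], rule exI[of _ e])
    using part1 part2 einj bnd(1) by (auto simp: I_def N_def wi_def)
qed



definition sg :: "bool \<Rightarrow> real" where "sg b = (if b then 1 else -1)"

lemma max_range_obtain:
  fixes f :: "'a::finite \<Rightarrow> 'b::linorder"
  obtains j where "Max (range f) = f j"
proof -
  have "Max (range f) \<in> range f" by (rule Max_in) auto
  then obtain j where "Max (range f) = f j" by blast
  then show thesis by (rule that)
qed

lemma sum_abs_max:
  fixes a :: "'i::finite \<Rightarrow> real"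
  shows "(\<Sum>i\<in>UNIV. sg (s i) * a i) \<le> (\<Sum>i\<in>UNIV. \<bar>a i\<bar>)"
    and "(\<Sum>i\<in>UNIV. sg (a i \<ge> 0) * a i) = (\<Sum>i\<in>UNIV. \<bar>a i\<bar>)"
  by (auto intro!: sum_mono sum.cong simp: sg_def)

lemma max_abs_pairs:
  fixes a :: "'j::finite \<Rightarrow> 'i::finite \<Rightarrow> real"
  shows "Max (range (\<lambda>j. \<Sum>i\<in>UNIV. \<bar>a j i\<bar>)) = Max (range (\<lambda>p. \<Sum>i\<in>UNIV. sg (snd p i) * a (fst p) i))"
proof -
  let ?C = "Max (range (\<lambda>j. \<Sum>i\<in>UNIV. \<bar>a j i\<bar>))"
  obtain j0 where j0: "?C = (\<Sum>i\<in>UNIV. \<bar>a j0 i\<bar>)"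
    by (rule max_range_obtain[of "\<lambda>j. \<Sum>i\<in>UNIV. \<bar>a j i\<bar>"])
  show ?thesis
  proof (rule Max_eqI[symmetric])
    show "finite (range (\<lambda>p. \<Sum>i\<in>UNIV. sg (snd p i) * a (fst p) i))" by simp
  next
    fix y assume "y \<in> range (\<lambda>p. \<Sum>i\<in>UNIV. sg (snd p i) * a (fst p) i)"
    then obtain j s where y: "y = (\<Sum>i\<in>UNIV. sg (s i) * a j i)" by auto
    have "y \<le> (\<Sum>i\<in>UNIV. \<bar>a j i\<bar>)" unfolding y by (rule sum_abs_max(1))
    also have "\<dots> \<le> ?C" by (rule Max_ge) auto
    finally show "y \<le> ?C" .
  next
    have "?C = (\<lambda>p. \<Sum>i\<in>UNIV. sg (snd p i) * a (fst p) i) (j0, \<lambda>i. a j0 i \<ge> 0)"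
      using j0 sum_abs_max(2)[of "a j0"] by simp
    then show "?C \<in> range (\<lambda>p. \<Sum>i\<in>UNIV. sg (snd p i) * a (fst p) i)" by blast
  qed
qed

lemma mv_comp: "(A *v x) $ i = (\<Sum>j\<in>UNIV. A$i$j * x$j)"
  by (simp add: matrix_vector_mult_def)

lemma opnorm_1:
  fixes A :: "real^'n^'m"
  shows "opnorm Norm1 A = Max (range (\<lambda>j. \<Sum>i\<in>UNIV. \<bar>A$i$j\<bar>))"
proof -
  let ?C = "Max (range (\<lambda>j. \<Sum>i\<in>UNIV. \<bar>A$i$j\<bar>))"
  have up: "vnorm Norm1 (A *v x) \<le> ?C" if x: "vnorm Norm1 x = 1" for x
  proof -
    have "vnorm Norm1 (A *v x) = (\<Sum>i\<in>UNIV. \<bar>\<Sum>j\<in>UNIV. A$i$j * x$j\<bar>)"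
      by (simp add: vnorm_def mv_comp)
    also have "\<dots> \<le> (\<Sum>i\<in>UNIV. \<Sum>j\<in>UNIV. \<bar>A$i$j\<bar> * \<bar>x$j\<bar>)"
      by (intro sum_mono order.trans[OF sum_abs]) (simp add: abs_mult)
    also have "\<dots> = (\<Sum>j\<in>UNIV. \<bar>x$j\<bar> * (\<Sum>i\<in>UNIV. \<bar>A$i$j\<bar>))"
      by (subst sum.swap) (simp add: sum_distrib_left mult.commute)
    also have "\<dots> \<le> (\<Sum>j\<in>UNIV. \<bar>x$j\<bar> * ?C)"
      by (intro sum_mono mult_left_mono Max_ge) auto
    also have "\<dots> = ?C" using x by (simp add: vnorm_def sum_distrib_right[symmetric])
    finally show ?thesis .
  qed
  obtain j0 where j0: "?C = (\<Sum>i\<in>UNIV. \<bar>A$i$j0\<bar>)"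
    by (rule max_range_obtain[of "\<lambda>j. \<Sum>i\<in>UNIV. \<bar>A$i$j\<bar>"])
  have ax: "vnorm Norm1 (axis j0 (1::real)) = 1"
    by (simp add: vnorm_def axis_def if_distrib[where f=abs] cong: if_cong)
  have av: "vnorm Norm1 (A *v axis j0 1) = ?C"
    by (simp add: vnorm_def mv_comp j0 axis_def if_distrib[where f="\<lambda>c. _ * c"] cong: if_cong)
  show ?thesis unfolding opnorm_def
    by (rule cSup_eq_maximum; use ax av[symmetric] up in blast)
qed

lemma opnorm_inf:
  fixes A :: "real^'n^'m"
  shows "opnorm NormInf A = Max (range (\<lambda>i. \<Sum>j\<in>UNIV. \<bar>A$i$j\<bar>))"
proof -
  let ?R = "Max (range (\<lambda>i. \<Sum>j\<in>UNIV. \<bar>A$i$j\<bar>))"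
  have up: "vnorm NormInf (A *v x) \<le> ?R" if x: "vnorm NormInf x = 1" for x
  proof -
    have xj: "\<bar>x$j\<bar> \<le> 1" for j using x Max_ge[of "range (\<lambda>i. \<bar>x$i\<bar>)" "\<bar>x$j\<bar>"]
      by (simp add: vnorm_def)
    have "\<bar>(A *v x)$i\<bar> \<le> ?R" for i
    proof -
      have "\<bar>(A *v x)$i\<bar> \<le> (\<Sum>j\<in>UNIV. \<bar>A$i$j\<bar> * \<bar>x$j\<bar>)"
        unfolding mv_comp by (rule order.trans[OF sum_abs]) (simp add: abs_mult)
      also have "\<dots> \<le> (\<Sum>j\<in>UNIV. \<bar>A$i$j\<bar>)"
        by (intro sum_mono) (use xj in \<open>simp add: mult_left_le\<close>)
      also have "\<dots> \<le> ?R" by (rule Max_ge) auto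
      finally show ?thesis .
    qed
    then show ?thesis by (simp add: vnorm_def)
  qed
  obtain i0 where i0: "?R = (\<Sum>j\<in>UNIV. \<bar>A$i0$j\<bar>)"
    by (rule max_range_obtain[of "\<lambda>i. \<Sum>j\<in>UNIV. \<bar>A$i$j\<bar>"])
  define x :: "real^'n" where "x = (\<chi> j. sg (A$i0$j \<ge> 0))"
  have xn: "vnorm NormInf x = 1"
  proof -
    have "range (\<lambda>j. \<bar>x$j\<bar>) = {1}" by (auto simp: x_def sg_def)
    then show ?thesis by (simp add: vnorm_def)
  qed
  have "(A *v x)$i0 = (\<Sum>j\<in>UNIV. \<bar>A$i0$j\<bar>)" unfolding mv_comp x_def
    using sum_abs_max(2)[of "\<lambda>j. A$i0$j"] by (simp add: mult.commute)
  then have "?R \<le> \<bar>(A *v x)$i0\<bar>" using i0 by simp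
  also have "\<dots> \<le> vnorm NormInf (A *v x)"
    unfolding vnorm_def normidx.case by (rule Max_ge) auto
  finally have "?R \<le> vnorm NormInf (A *v x)" .
  then have av: "vnorm NormInf (A *v x) = ?R" using up[OF xn] by (rule antisym[rotated])
  show ?thesis unfolding opnorm_def
    by (rule cSup_eq_maximum; use xn av[symmetric] up in blast)
qed



lemma lin_entry:
  fixes L :: "real^'n \<Rightarrow> real^'n^'m"
  assumes "linear L"
  shows "(L x)$i$j = (\<chi> k. L (axis k 1) $i$j) \<bullet> x"
proof -
  have e: "(\<Sum>k\<in>UNIV. x$k *\<^sub>R axis k 1) = x" using basis_expansion[of x] by (simp add: scalar_mult_eq_scaleR)
  have "L x = L (\<Sum>k\<in>UNIV. x$k *\<^sub>R axis k 1)" by (simp only: e)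
  also have "\<dots> = (\<Sum>k\<in>UNIV. x$k *\<^sub>R L (axis k 1))"
    using assms by (simp add: linear_sum linear_scale o_def)
  finally have "L x = (\<Sum>k\<in>UNIV. x$k *\<^sub>R L (axis k 1))" .
  then show ?thesis by (simp add: sum_component inner_vec_def mult.commute)
qed

lemma rep_nat:
  fixes cf0 :: "'a::finite \<Rightarrow> real^'n" and bf0 :: "'a \<Rightarrow> real"
  shows "\<exists>cf bf nl. nl > 0 \<and> (\<forall>x. Max (range (\<lambda>p. cf0 p \<bullet> x + bf0 p)) = Max ((\<lambda>t. cf t \<bullet> x + bf t) ` {..<(nl::nat)}))"
proof -
  obtain ts :: "'a list" where ts: "set ts = UNIV" using finite_list[of "UNIV::'a set"] by auto
  have im: "(!) ts ` {..<length ts} = UNIV"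
  proof -
    have "x \<in> (!) ts ` {..<length ts}" for x
    proof -
      have "x \<in> set ts" using ts by simp
      then obtain i where "i < length ts" "ts ! i = x" by (auto simp: in_set_conv_nth)
      then show ?thesis by force
    qed
    then show ?thesis by blast
  qed
  have "length ts > 0"
  proof (rule ccontr)
    assume "\<not> length ts > 0"
    then have "ts = []" by simp
    then show False using ts by simp
  qed
  moreover have "Max (range (\<lambda>p. cf0 p \<bullet> x + bf0 p)) = Max ((\<lambda>t. cf0 (ts!t) \<bullet> x + bf0 (ts!t)) ` {..<length ts})" for x
  proof -
    have "(\<lambda>t. cf0 (ts!t) \<bullet> x + bf0 (ts!t)) ` {..<length ts} = (\<lambda>p. cf0 p \<bullet> x + bf0 p) ` ((!) ts ` {..<length ts})"
      by (simp add: image_image)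
    also have "\<dots> = range (\<lambda>p. cf0 p \<bullet> x + bf0 p)" by (simp only: im)
    finally have eq: "(\<lambda>t. cf0 (ts!t) \<bullet> x + bf0 (ts!t)) ` {..<length ts} = range (\<lambda>p. cf0 p \<bullet> x + bf0 p)" .
    show ?thesis by (simp only: eq)
  qed
  ultimately show ?thesis
    by (intro exI[of _ "\<lambda>t. cf0 (ts!t)"] exI[of _ "\<lambda>t. bf0 (ts!t)"] exI[of _ "length ts"]) simp
qed

lemma opnorm_rep:
  fixes X :: "(real ^ 'n) set" and K :: "real ^ 'n \<Rightarrow> real ^ 'n ^ 'm" and L :: "real ^ 'n \<Rightarrow> real ^ 'n ^ 'm"
  assumes L: "linear L" and KX: "\<forall>x\<in>X. K x = K0 + L x"
  shows "\<exists>cf bf nl. nl > 0 \<and> (\<forall>x\<in>X. opnorm \<alpha> (K x) = Max ((\<lambda>t. cf t \<bullet> x + bf t) ` {..<(nl::nat)}))"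
proof -
  define cv where "cv i j = (\<chi> k. L (axis k 1) $i$j)" for i j
  have ent: "(K x)$i$j = cv i j \<bullet> x + K0$i$j" if "x \<in> X" for x i j
    using KX that lin_entry[OF L, of x i j] by (simp add: cv_def)
  show ?thesis
  proof (cases \<alpha>)
    case Norm1
    define cf0 where "cf0 p = (\<Sum>i\<in>UNIV. sg (snd p i) *\<^sub>R cv i (fst p))" for p :: "'n \<times> ('m \<Rightarrow> bool)"
    define bf0 where "bf0 p = (\<Sum>i\<in>UNIV. sg (snd p i) * K0$i$(fst p))" for p :: "'n \<times> ('m \<Rightarrow> bool)"
    obtain cf bf nl where r: "nl > 0" "\<And>x. Max (range (\<lambda>p. cf0 p \<bullet> x + bf0 p)) = Max ((\<lambda>t. cf t \<bullet> x + bf t) ` {..<(nl::nat)})"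
      using rep_nat[of cf0 bf0] by blast
    have "opnorm \<alpha> (K x) = Max (range (\<lambda>p. cf0 p \<bullet> x + bf0 p))" if x: "x \<in> X" for x
    proof -
      have "opnorm \<alpha> (K x) = Max (range (\<lambda>p. \<Sum>i\<in>UNIV. sg (snd p i) * (K x)$i$(fst p)))"
        unfolding Norm1 opnorm_1 using max_abs_pairs[of "\<lambda>j i. (K x)$i$j"] by simp
      also have "\<dots> = Max (range (\<lambda>p. cf0 p \<bullet> x + bf0 p))"
        by (simp add: ent[OF x] cf0_def bf0_def inner_sum_left algebra_simps sum.distrib)
      finally show ?thesis .
    qed
    then show ?thesis using r by (intro exI[of _ cf] exI[of _ bf] exI[of _ nl]) auto
  next
    case NormInf
    define cf0 where "cf0 p = (\<Sum>j\<in>UNIV. sg (snd p j) *\<^sub>R cv (fst p) j)" for p :: "'m \<times> ('n \<Rightarrow> bool)"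
    define bf0 where "bf0 p = (\<Sum>j\<in>UNIV. sg (snd p j) * K0$(fst p)$j)" for p :: "'m \<times> ('n \<Rightarrow> bool)"
    obtain cf bf nl where r: "nl > 0" "\<And>x. Max (range (\<lambda>p. cf0 p \<bullet> x + bf0 p)) = Max ((\<lambda>t. cf t \<bullet> x + bf t) ` {..<(nl::nat)})"
      using rep_nat[of cf0 bf0] by blast
    have "opnorm \<alpha> (K x) = Max (range (\<lambda>p. cf0 p \<bullet> x + bf0 p))" if x: "x \<in> X" for x
    proof -
      have "opnorm \<alpha> (K x) = Max (range (\<lambda>p. \<Sum>j\<in>UNIV. sg (snd p j) * (K x)$(fst p)$j))"
        unfolding NormInf opnorm_inf using max_abs_pairs[of "\<lambda>i j. (K x)$i$j"] by simp
      also have "\<dots> = Max (range (\<lambda>p. cf0 p \<bullet> x + bf0 p))"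
        by (simp add: ent[OF x] cf0_def bf0_def inner_sum_left algebra_simps sum.distrib)
      finally show ?thesis .
    qed
    then show ?thesis using r by (intro exI[of _ cf] exI[of _ bf] exI[of _ nl]) auto
  qed
qed

theorem proposition1:
  fixes X :: "(real ^ 'n) set"
    and K :: "real ^ 'n \<Rightarrow> real ^ 'n ^ 'm"
    and \<alpha> :: normidx
  assumes "polytope X"
    and "X \<noteq> {}"
    and "\<exists>K0 L. linear L \<and> (\<forall>x\<in>X. K x = K0 + L x)"
  shows "(\<exists>x0\<in>X. opnorm \<alpha> (K x0) = (SUP x\<in>X. opnorm \<alpha> (K x))) \<and>
         (\<exists>N p A b I c e.
            I \<subseteq> {..<N} \<and> inj e \<and> (\<forall>j. e j < N) \<and>
            milp_opt_value N p A b I c (SUP x\<in>X. opnorm \<alpha> (K x)) \<and>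
            (\<forall>z\<in>milp_feasible N p A b I.
                (\<chi> j. z (e j)) \<in> X \<and> milp_obj N c z \<le> opnorm \<alpha> (K (\<chi> j. z (e j)))) \<and>
            (\<forall>x\<in>X. \<exists>z\<in>milp_feasible N p A b I.
                (\<chi> j. z (e j)) = x \<and> milp_obj N c z = opnorm \<alpha> (K x)))"
proof -
  obtain K0 L where L: "linear L" "\<forall>x\<in>X. K x = K0 + L x" using assms(3) by blast
  obtain cf bf nl where nl: "nl > 0" and rep: "\<And>x. x \<in> X \<Longrightarrow> opnorm \<alpha> (K x) = Max ((\<lambda>t. cf t \<bullet> x + bf t) ` {..<(nl::nat)})"
    using opnorm_rep[OF L] by blast
  define F where "F x = Max ((\<lambda>t. cf t \<bullet> x + bf t) ` {..<nl})" for x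
  obtain S where S: "finite S" "X = convex hull S" using assms(1) unfolding polytope_def by blast
  have cX: "compact X" using assms(1) by (rule polytope_imp_compact)
  then have bX: "bounded X" by (rule compact_imp_bounded)
  obtain N p A b I c e where M: "I \<subseteq> {..<N}" "inj e" "\<forall>j. e j < N"
     "\<forall>z\<in>milp_feasible N p A b I. (\<chi> j. z (e j)) \<in> X \<and> milp_obj N c z \<le> F (\<chi> j. z (e j))"
     "\<forall>x\<in>X. \<exists>z\<in>milp_feasible N p A b I. (\<chi> j. z (e j)) = x \<and> milp_obj N c z = F x"
    using milp_max[OF S(2,1) nl bX, of cf bf] unfolding F_def by blast
  have "\<forall>t. \<exists>xx. t < nl \<longrightarrow> xx \<in> X \<and> (\<forall>y\<in>X. cf t \<bullet> y + bf t \<le> cf t \<bullet> xx + bf t)"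
  proof
    fix t
    have "continuous_on X (\<lambda>y. cf t \<bullet> y + bf t)" by (intro continuous_intros)
    then obtain xx where "xx \<in> X" "\<forall>y\<in>X. cf t \<bullet> y + bf t \<le> cf t \<bullet> xx + bf t"
      using continuous_attains_sup[OF cX assms(2)] by blast
    then show "\<exists>xx. t < nl \<longrightarrow> xx \<in> X \<and> (\<forall>y\<in>X. cf t \<bullet> y + bf t \<le> cf t \<bullet> xx + bf t)" by blast
  qed
  from choice[OF this] obtain xt where xt0: "\<forall>t. t < nl \<longrightarrow> xt t \<in> X \<and> (\<forall>y\<in>X. cf t \<bullet> y + bf t \<le> cf t \<bullet> xt t + bf t)"
    by blast
  have xt: "\<And>t. t < nl \<Longrightarrow> xt t \<in> X" "\<And>t y. t < nl \<Longrightarrow> y \<in> X \<Longrightarrow> cf t \<bullet> y + bf t \<le> cf t \<bullet> xt t + bf t"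
    using xt0 by auto
  have "Max ((\<lambda>t. cf t \<bullet> xt t + bf t) ` {..<nl}) \<in> (\<lambda>t. cf t \<bullet> xt t + bf t) ` {..<nl}"
    by (rule Max_in) (use nl in auto)
  then obtain ts where ts: "ts < nl" "Max ((\<lambda>t. cf t \<bullet> xt t + bf t) ` {..<nl}) = cf ts \<bullet> xt ts + bf ts" by auto
  define x0 where "x0 = xt ts"
  have x0X: "x0 \<in> X" using xt(1)[OF ts(1)] x0_def by simp
  have x0max: "F y \<le> F x0" if y: "y \<in> X" for y
  proof -
    have "F y \<in> (\<lambda>t. cf t \<bullet> y + bf t) ` {..<nl}" unfolding F_def by (rule Max_in) (use nl in auto)
    then obtain s where s: "s < nl" "F y = cf s \<bullet> y + bf s" by auto
    have "F y \<le> cf s \<bullet> xt s + bf s" using s xt(2)[OF s(1) y] by simp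
    also have "\<dots> \<le> cf ts \<bullet> x0 + bf ts" using ts(2)[symmetric] s(1) x0_def
      by (metis (no_types, lifting) Max_ge finite_imageI finite_lessThan image_eqI lessThan_iff)
    also have "\<dots> \<le> F x0" unfolding F_def by (rule Max_ge) (use ts in auto)
    finally show ?thesis .
  qed
  have sup: "(SUP x\<in>X. opnorm \<alpha> (K x)) = opnorm \<alpha> (K x0)"
  proof (rule cSup_eq_maximum)
    show "opnorm \<alpha> (K x0) \<in> (\<lambda>x. opnorm \<alpha> (K x)) ` X" using x0X by blast
    fix y assume "y \<in> (\<lambda>x. opnorm \<alpha> (K x)) ` X"
    then obtain x where "x \<in> X" "y = opnorm \<alpha> (K x)" by blast
    then show "y \<le> opnorm \<alpha> (K x0)" using x0max[of x] rep[of x] rep[OF x0X] F_def by simp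
  qed
  have opt: "milp_opt_value N p A b I c (SUP x\<in>X. opnorm \<alpha> (K x))"
    unfolding milp_opt_value_def sup
  proof
    show "\<exists>z\<in>milp_feasible N p A b I. milp_obj N c z = opnorm \<alpha> (K x0)"
      using M(5) x0X rep[OF x0X] F_def by auto
    show "\<forall>z\<in>milp_feasible N p A b I. milp_obj N c z \<le> opnorm \<alpha> (K x0)"
    proof
      fix z assume z: "z \<in> milp_feasible N p A b I"
      then have "(\<chi> j. z (e j)) \<in> X" "milp_obj N c z \<le> F (\<chi> j. z (e j))" using M(4) by auto
      then show "milp_obj N c z \<le> opnorm \<alpha> (K x0)" using x0max[of "\<chi> j. z (e j)"] rep[OF x0X] F_def by simp
    qed
  qed
  show ?thesis
  proof (intro conjI)
    show "\<exists>x0\<in>X. opnorm \<alpha> (K x0) = (SUP x\<in>X. opnorm \<alpha> (K x))" using x0X sup by auto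
    show "\<exists>N p A b I c e.
            I \<subseteq> {..<N} \<and> inj e \<and> (\<forall>j. e j < N) \<and>
            milp_opt_value N p A b I c (SUP x\<in>X. opnorm \<alpha> (K x)) \<and>
            (\<forall>z\<in>milp_feasible N p A b I.
                (\<chi> j. z (e j)) \<in> X \<and> milp_obj N c z \<le> opnorm \<alpha> (K (\<chi> j. z (e j)))) \<and>
            (\<forall>x\<in>X. \<exists>z\<in>milp_feasible N p A b I.
                (\<chi> j. z (e j)) = x \<and> milp_obj N c z = opnorm \<alpha> (K x))"
      apply (rule exI[of _ N], rule exI[of _ p], rule exI[of _ A], rule exI[of _ b], rule exI[of _ I],
             rule exI[of _ c], rule exI[of _ e])
      using M opt rep F_def by auto
  qed
qed

end
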